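(* Let $\mathcal{G}$ be a network with non-monitor set $N$ and set of measurement paths $P$, and let $k\ge1$. Let $S'(k):=\{v\in N: v\text{ is }k\text{-identifiable}\}$ and let $S^*(k)$ be a maximum-cardinality $k$-identifiable subset of $N$. Then $S'(k)=S^*(k)$.
   Context: $\mathcal{G}$ is a finite connected undirected graph whose node set is partitioned into monitors $M$ and non-monitors $N$; $P$ is an arbitrary set of measurement paths. A failure set is any $F\subseteq N$; a path fails iff it traverses a node of $F$. $P_F$ is the set of paths in $P$ traversing at least one node of $F$; $F_1,F_2$ are distinguishable iff $P_{F_1}\ne P_{F_2}$. For $S\subseteq N$, $S$ is $k$-identifiable if any two failure sets $F_1,F_2$ with $|F_1|,|F_2|\le k$ and $F_1\cap S\ne F_2\cap S$ are distinguishable; a node $v$ is $k$-identifiable if $\{v\}$ is. *)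

theory Defs
  imports Main
begin

definition connected_graph :: "'a set \<Rightarrow> ('a \<Rightarrow> 'a \<Rightarrow> bool) \<Rightarrow> bool" where
  "connected_graph V E \<longleftrightarrow> finite V \<and> V \<noteq> {} \<and>
     (\<forall>u v. E u v \<longrightarrow> u \<in> V \<and> v \<in> V) \<and>
     (\<forall>u v. E u v \<longrightarrow> E v u) \<and> (\<forall>v. \<not> E v v) \<and>
     (\<forall>u\<in>V. \<forall>v\<in>V. E\<^sup>*\<^sup>* u v)"

definition is_path :: "'a set \<Rightarrow> ('a \<Rightarrow> 'a \<Rightarrow> bool) \<Rightarrow> 'a list \<Rightarrow> bool" where
  "is_path V E p \<longleftrightarrow> p \<noteq> [] \<and> distinct p \<and> set p \<subseteq> V \<and>
     (\<forall>i. Suc i < length p \<longrightarrow> E (p ! i) (p ! Suc i))"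

definition measurement_path :: "'a set \<Rightarrow> ('a \<Rightarrow> 'a \<Rightarrow> bool) \<Rightarrow> 'a set \<Rightarrow> 'a list \<Rightarrow> bool" where
  "measurement_path V E M p \<longleftrightarrow> is_path V E p \<and> hd p \<in> M \<and> last p \<in> M"

definition failed_paths :: "'a list set \<Rightarrow> 'a set \<Rightarrow> 'a list set" where
  "failed_paths P F = {p \<in> P. \<exists>v\<in>F. v \<in> set p}"

definition distinguishable :: "'a list set \<Rightarrow> 'a set \<Rightarrow> 'a set \<Rightarrow> bool" where
  "distinguishable P F1 F2 \<longleftrightarrow> failed_paths P F1 \<noteq> failed_paths P F2"

definition k_identifiable :: "'a list set \<Rightarrow> 'a set \<Rightarrow> nat \<Rightarrow> 'a set \<Rightarrow> bool" where
  "k_identifiable P N k S \<longleftrightarrow>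
     (\<forall>F1 F2. F1 \<subseteq> N \<longrightarrow> F2 \<subseteq> N \<longrightarrow> card F1 \<le> k \<longrightarrow> card F2 \<le> k \<longrightarrow>
        F1 \<inter> S \<noteq> F2 \<inter> S \<longrightarrow> distinguishable P F1 F2)"

end

theory Submission
  imports Defs
begin

lemma kid_mono:
  assumes "k_identifiable P N k S" "T \<subseteq> S" shows "k_identifiable P N k T"
  unfolding k_identifiable_def
proof (intro allI impI)
  fix F1 F2 assume h: "F1 \<subseteq> N" "F2 \<subseteq> N" "card F1 \<le> k" "card F2 \<le> k" "F1 \<inter> T \<noteq> F2 \<inter> T"
  have "F1 \<inter> S \<noteq> F2 \<inter> S" using h(5) assms(2) by auto
  have "\<forall>F1 F2. F1 \<subseteq> N \<longrightarrow> F2 \<subseteq> N \<longrightarrow> card F1 \<le> k \<longrightarrow> card F2 \<le> k \<longrightarrow>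
        F1 \<inter> S \<noteq> F2 \<inter> S \<longrightarrow> distinguishable P F1 F2"
    using assms(1) unfolding k_identifiable_def .
  thus "distinguishable P F1 F2" using h(1-4) \<open>F1 \<inter> S \<noteq> F2 \<inter> S\<close> by blast
qed

lemma kid_union:
  assumes a: "\<And>v. v \<in> A \<Longrightarrow> k_identifiable P N k {v}" shows "k_identifiable P N k A"
  unfolding k_identifiable_def
proof (intro allI impI)
  fix F1 F2 assume h: "F1 \<subseteq> N" "F2 \<subseteq> N" "card F1 \<le> k" "card F2 \<le> k" "F1 \<inter> A \<noteq> F2 \<inter> A"
  then obtain v where v: "v \<in> A" "F1 \<inter> {v} \<noteq> F2 \<inter> {v}" by auto
  have "\<forall>F1 F2. F1 \<subseteq> N \<longrightarrow> F2 \<subseteq> N \<longrightarrow> card F1 \<le> k \<longrightarrow> card F2 \<le> k \<longrightarrow>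
        F1 \<inter> {v} \<noteq> F2 \<inter> {v} \<longrightarrow> distinguishable P F1 F2"
    using a[OF v(1)] unfolding k_identifiable_def .
  thus "distinguishable P F1 F2" using h(1-4) v(2) by blast
qed

theorem proposition2:
  fixes V M N :: "'a set" and E :: "'a \<Rightarrow> 'a \<Rightarrow> bool"
    and P :: "'a list set" and k :: nat and Sstar :: "'a set"
  assumes "connected_graph V E"
    and "M \<union> N = V" and "M \<inter> N = {}"
    and "\<forall>p\<in>P. measurement_path V E M p"
    and "k \<ge> 1"
    and "Sstar \<subseteq> N" and "k_identifiable P N k Sstar"
    and "\<forall>S. S \<subseteq> N \<longrightarrow> k_identifiable P N k S \<longrightarrow> card S \<le> card Sstar"
  shows "{v \<in> N. k_identifiable P N k {v}} = Sstar"
proof -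
  let ?S = "{v \<in> N. k_identifiable P N k {v}}"
  have fin: "finite N" using assms(1,2) unfolding connected_graph_def
    by (meson finite_Un)
  have sub: "Sstar \<subseteq> ?S" proof
    fix v assume "v \<in> Sstar"
    thus "v \<in> ?S" using assms(6) kid_mono[OF assms(7), of "{v}"] by auto
  qed
  have "k_identifiable P N k ?S" by (rule kid_union) blast
  moreover have "?S \<subseteq> N" by (rule subsetI) simp
  ultimately have c: "card ?S \<le> card Sstar" using assms(8) by simp
  have f: "finite ?S" using fin by simp
  show ?thesis using card_seteq[OF f sub c] by (rule sym)
qed

end
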